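(* Let $\nu\ge0$, $\epsilon\in\{0,1\}$ and let $\zeta$ be a real parameter with $1+\zeta\nu^2\neq0$. Then the equation $$-2\nu^2U_XU_{XX}+3\epsilon U_XU-\nu^2U_{XXX}U+\tfrac23U_{XXX}-\tfrac23\nu^{5/2}U_{XXX}+\epsilon U_T-\nu^2U_{XXT}=0\qquad(E_{\nu,\epsilon})$$ describes pseudo-spherical surfaces with associated one-forms $\omega^i=f_{i1}dX+f_{i2}dT$, where $f_{11}=\frac13\epsilon\zeta+\frac13\sqrt\nu\,\epsilon+\nu^2U_{XX}-\epsilon U+\frac{3}{4(1+\zeta\nu^2)}$, $f_{12}=\frac23(1-\nu^{5/2})U_{XX}+\frac\epsilon3(\zeta+\sqrt\nu)U+\epsilon U^2-\nu^2UU_{XX}-\frac29\epsilon(\zeta^2+2\sqrt\nu\zeta+\nu)-\frac{1}{2(1+\zeta\nu^2)}\big(\tfrac32U+\zeta+\sqrt\nu\big)$, $f_{21}=0$, $f_{22}=-U_X$, $f_{31}=-\frac13\epsilon\zeta-\frac13\sqrt\nu\,\epsilon-\nu^2U_{XX}+\epsilon U+\frac{3}{4(1+\zeta\nu^2)}$, $f_{32}=-\frac23(1-\nu^{5/2})U_{XX}-\frac\epsilon3(\zeta+\sqrt\nu)U-\epsilon U^2+\nu^2UU_{XX}+\frac29\epsilon(\zeta^2+2\sqrt\nu\zeta+\nu)-\frac{1}{2(1+\zeta\nu^2)}\big(\tfrac32U+\zeta+\sqrt\nu\big)$. That is, for every smooth solution $U$ the pulled-back forms satisfy $d\omega^1=\omega^3\wedge\omega^2$,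 $d\omega^2=\omega^1\wedge\omega^3$, $d\omega^3=\omega^1\wedge\omega^2$.
   Context: An equation describes pseudo-spherical surfaces if there are one-forms $\omega^i=f_{i1}dX+f_{i2}dT\neq0$ ($i=1,2,3$), with coefficients smooth functions of the independent variables, $U$ and finitely many derivatives of $U$, whose pullbacks by any solution satisfy the three structure equations $d\omega^1=\omega^3\wedge\omega^2$, $d\omega^2=\omega^1\wedge\omega^3$, $d\omega^3=\omega^1\wedge\omega^2$. *)

theory Defs
  imports "HOL-Analysis.Analysis"
begin

definition px :: "(real \<Rightarrow> real \<Rightarrow> real) \<Rightarrow> real \<Rightarrow> real \<Rightarrow> real" where
  "px F x t = deriv (\<lambda>y. F y t) x"

definition pt :: "(real \<Rightarrow> real \<Rightarrow> real) \<Rightarrow> real \<Rightarrow> real \<Rightarrow> real" where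
  "pt F x t = deriv (\<lambda>s. F x s) t"

text \<open>Iterated partial derivatives: True = d/dX, False = d/dT (applied right to left).\<close>
fun pd :: "bool list \<Rightarrow> (real \<Rightarrow> real \<Rightarrow> real) \<Rightarrow> real \<Rightarrow> real \<Rightarrow> real" where
  "pd [] F = F"
| "pd (b # ds) F = (if b then px (pd ds F) else pt (pd ds F))"

definition smooth_on2 :: "(real \<times> real) set \<Rightarrow> (real \<Rightarrow> real \<Rightarrow> real) \<Rightarrow> bool" where
  "smooth_on2 S F \<longleftrightarrow>
     (\<forall>ds. \<forall>(x,t)\<in>S. (\<lambda>y. pd ds F y t) differentiable (at x)
                   \<and> (\<lambda>s. pd ds F x s) differentiable (at t))
   \<and> (\<forall>ds. continuous_on S (\<lambda>(x,t). pd ds F x t))"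

text \<open>Structure equations for the one-forms w_i = a_i dX + b_i dT on S:
  d w1 = w3 /\ w2, d w2 = w1 /\ w3, d w3 = w1 /\ w2,
  where d(a dX + b dT) = (b_X - a_T) dX/\dT and
  (a dX + b dT)/\(c dX + e dT) = (a e - b c) dX/\dT.\<close>
definition structure_eqs ::
  "(real \<times> real) set \<Rightarrow> (real \<Rightarrow> real \<Rightarrow> real) \<Rightarrow> (real \<Rightarrow> real \<Rightarrow> real) \<Rightarrow>
   (real \<Rightarrow> real \<Rightarrow> real) \<Rightarrow> (real \<Rightarrow> real \<Rightarrow> real) \<Rightarrow>
   (real \<Rightarrow> real \<Rightarrow> real) \<Rightarrow> (real \<Rightarrow> real \<Rightarrow> real) \<Rightarrow> bool" where
  "structure_eqs S a1 b1 a2 b2 a3 b3 \<longleftrightarrow>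
     (\<forall>(x,t)\<in>S.
        px b1 x t - pt a1 x t = a3 x t * b2 x t - b3 x t * a2 x t
      \<and> px b2 x t - pt a2 x t = a1 x t * b3 x t - b1 x t * a3 x t
      \<and> px b3 x t - pt a3 x t = a1 x t * b2 x t - b1 x t * a2 x t)"

text \<open>Coefficients f_ij as functions of the parameters (nu, eps, zeta) and of the
  jet variables u = U, ux = U_X, uxx = U_XX.\<close>
definition f11 :: "real \<Rightarrow> real \<Rightarrow> real \<Rightarrow> real \<Rightarrow> real \<Rightarrow> real \<Rightarrow> real" where
  "f11 nu eps zeta u ux uxx =
     1/3 * eps * zeta + 1/3 * sqrt nu * eps + nu^2 * uxx - eps * u + 3 / (4 * (1 + zeta * nu^2))"

definition f12 :: "real \<Rightarrow> real \<Rightarrow> real \<Rightarrow> real \<Rightarrow> real \<Rightarrow> real \<Rightarrow> real" where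
  "f12 nu eps zeta u ux uxx =
     2/3 * (1 - nu powr (5/2)) * uxx + eps/3 * (zeta + sqrt nu) * u + eps * u^2
     - nu^2 * u * uxx - 2/9 * eps * (zeta^2 + 2 * sqrt nu * zeta + nu)
     - 1 / (2 * (1 + zeta * nu^2)) * (3/2 * u + zeta + sqrt nu)"

definition f21 :: "real \<Rightarrow> real \<Rightarrow> real \<Rightarrow> real \<Rightarrow> real \<Rightarrow> real \<Rightarrow> real" where
  "f21 nu eps zeta u ux uxx = 0"

definition f22 :: "real \<Rightarrow> real \<Rightarrow> real \<Rightarrow> real \<Rightarrow> real \<Rightarrow> real \<Rightarrow> real" where
  "f22 nu eps zeta u ux uxx = - ux"

definition f31 :: "real \<Rightarrow> real \<Rightarrow> real \<Rightarrow> real \<Rightarrow> real \<Rightarrow> real \<Rightarrow> real" where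
  "f31 nu eps zeta u ux uxx =
     - 1/3 * eps * zeta - 1/3 * sqrt nu * eps - nu^2 * uxx + eps * u + 3 / (4 * (1 + zeta * nu^2))"

definition f32 :: "real \<Rightarrow> real \<Rightarrow> real \<Rightarrow> real \<Rightarrow> real \<Rightarrow> real \<Rightarrow> real" where
  "f32 nu eps zeta u ux uxx =
     - 2/3 * (1 - nu powr (5/2)) * uxx - eps/3 * (zeta + sqrt nu) * u - eps * u^2
     + nu^2 * u * uxx + 2/9 * eps * (zeta^2 + 2 * sqrt nu * zeta + nu)
     - 1 / (2 * (1 + zeta * nu^2)) * (3/2 * u + zeta + sqrt nu)"

definition eqE :: "real \<Rightarrow> real \<Rightarrow> (real \<Rightarrow> real \<Rightarrow> real) \<Rightarrow> real \<Rightarrow> real \<Rightarrow> bool" where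
  "eqE nu eps U x t \<longleftrightarrow>
     (let u = U x t; ux = px U x t; uxx = px (px U) x t; uxxx = px (px (px U)) x t;
          ut = pt U x t; uxxt = pt (px (px U)) x t in
      - 2 * nu^2 * ux * uxx + 3 * eps * ux * u - nu^2 * uxxx * u + 2/3 * uxxx
      - 2/3 * nu powr (5/2) * uxxx + eps * ut - nu^2 * uxxt = 0)"

definition pull ::
  "(real \<Rightarrow> real \<Rightarrow> real \<Rightarrow> real \<Rightarrow> real \<Rightarrow> real \<Rightarrow> real) \<Rightarrow> real \<Rightarrow> real \<Rightarrow> real \<Rightarrow>
   (real \<Rightarrow> real \<Rightarrow> real) \<Rightarrow> real \<Rightarrow> real \<Rightarrow> real" where
  "pull f nu eps zeta U x t = f nu eps zeta (U x t) (px U x t) (px (px U) x t)"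

end

theory Submission
  imports Defs
begin

lemma d11: "(a has_real_derivative a') (at x) \<Longrightarrow> (c has_real_derivative c') (at x) \<Longrightarrow>
  deriv (\<lambda>y. f11 nu eps zeta (a y) (b y) (c y)) x = nu^2*c' - eps*a'"
  unfolding f11_def by (rule DERIV_imp_deriv) (auto intro!: derivative_eq_intros)

lemma d31: "(a has_real_derivative a') (at x) \<Longrightarrow> (c has_real_derivative c') (at x) \<Longrightarrow>
  deriv (\<lambda>y. f31 nu eps zeta (a y) (b y) (c y)) x = eps*a' - nu^2*c'"
  unfolding f31_def by (rule DERIV_imp_deriv) (auto intro!: derivative_eq_intros)

lemma d21: "deriv (\<lambda>y. f21 nu eps zeta (a y) (b y) (c y)) x = 0"
  unfolding f21_def by simp

lemma d22: "(b has_real_derivative b') (at x) \<Longrightarrow>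
  deriv (\<lambda>y. f22 nu eps zeta (a y) (b y) (c y)) x = - b'"
  unfolding f22_def by (rule DERIV_imp_deriv) (auto intro!: derivative_eq_intros)

lemma d12: "1 + zeta * nu^2 \<noteq> 0 \<Longrightarrow> (a has_real_derivative a') (at x) \<Longrightarrow> (c has_real_derivative c') (at x) \<Longrightarrow>
  deriv (\<lambda>y. f12 nu eps zeta (a y) (b y) (c y)) x =
   2/3 * (1 - nu powr (5/2)) * c' + eps/3 * (zeta + sqrt nu) * a' + eps * (2 * a x * a')
     - nu^2 * (a' * c x + a x * c') - 1 / (2 * (1 + zeta * nu^2)) * (3/2 * a')"
  proof -
  assume nz: "1 + zeta * nu^2 \<noteq> 0" and da: "(a has_real_derivative a') (at x)" and dc: "(c has_real_derivative c') (at x)"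
  define K where "K = 1 / (2 * (1 + zeta * nu^2))"
  show ?thesis unfolding f12_def K_def[symmetric]
    by (rule DERIV_imp_deriv) (use da dc in \<open>auto intro!: derivative_eq_intros simp: algebra_simps\<close>)
qed

lemma d32: "1 + zeta * nu^2 \<noteq> 0 \<Longrightarrow> (a has_real_derivative a') (at x) \<Longrightarrow> (c has_real_derivative c') (at x) \<Longrightarrow>
  deriv (\<lambda>y. f32 nu eps zeta (a y) (b y) (c y)) x =
   - 2/3 * (1 - nu powr (5/2)) * c' - eps/3 * (zeta + sqrt nu) * a' - eps * (2 * a x * a')
     + nu^2 * (a' * c x + a x * c') - 1 / (2 * (1 + zeta * nu^2)) * (3/2 * a')"
  proof -
  assume nz: "1 + zeta * nu^2 \<noteq> 0" and da: "(a has_real_derivative a') (at x)" and dc: "(c has_real_derivative c') (at x)"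
  define K where "K = 1 / (2 * (1 + zeta * nu^2))"
  show ?thesis unfolding f32_def K_def[symmetric]
    by (rule DERIV_imp_deriv) (use da dc in \<open>auto intro!: derivative_eq_intros simp: algebra_simps\<close>)
qed

lemma pxp: "px (pull f nu eps zeta U) x t = deriv (\<lambda>y. f nu eps zeta (U y t) (px U y t) (px (px U) y t)) x"
  unfolding pull_def by (simp add: px_def[of "\<lambda>x t. f nu eps zeta (U x t) (px U x t) (px (px U) x t)"])

lemma ptp: "pt (pull f nu eps zeta U) x t = deriv (\<lambda>s. f nu eps zeta (U x s) (px U x s) (px (px U) x s)) t"
  unfolding pull_def pt_def by simp

lemma alg0:
  fixes nu eps zeta u ux uxx uxxx ut uxxt s P K C :: real
  assumes s: "s^2 = nu" and P: "P = nu^2 * s" and K: "K * (2 * (1 + zeta * nu^2)) = 1" and C: "C = 3/2*K"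
  and E: "- 2 * nu^2 * ux * uxx + 3 * eps * ux * u - nu^2 * uxxx * u + 2/3 * uxxx
      - 2/3 * P * uxxx + eps * ut - nu^2 * uxxt = 0"
  shows "(2/3 * (1 - P) * uxxx + eps/3 * (zeta + s) * ux + eps * (2 * u * ux)
     - nu^2 * (ux * uxx + u * uxxx) - K * (3/2 * ux)) - (nu^2*uxxt - eps*ut)
       = (- 1/3 * eps * zeta - 1/3 * s * eps - nu^2 * uxx + eps * u + C) * (-ux)
         - (- 2/3 * (1 - P) * uxx - eps/3 * (zeta + s) * u - eps * u^2
     + nu^2 * u * uxx + 2/9 * eps * (zeta^2 + 2 * s * zeta + nu)
     - K * (3/2 * u + zeta + s)) * 0"
    and "- uxx - 0 = (1/3 * eps * zeta + 1/3 * s * eps + nu^2 * uxx - eps * u + C) *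
        (- 2/3 * (1 - P) * uxx - eps/3 * (zeta + s) * u - eps * u^2
     + nu^2 * u * uxx + 2/9 * eps * (zeta^2 + 2 * s * zeta + nu)
     - K * (3/2 * u + zeta + s))
      - (2/3 * (1 - P) * uxx + eps/3 * (zeta + s) * u + eps * u^2
     - nu^2 * u * uxx - 2/9 * eps * (zeta^2 + 2 * s * zeta + nu)
     - K * (3/2 * u + zeta + s)) * (- 1/3 * eps * zeta - 1/3 * s * eps - nu^2 * uxx + eps * u + C)"
    and "(- 2/3 * (1 - P) * uxxx - eps/3 * (zeta + s) * ux - eps * (2 * u * ux)
     + nu^2 * (ux * uxx + u * uxxx) - K * (3/2 * ux)) - (eps*ut - nu^2*uxxt)
       = (1/3 * eps * zeta + 1/3 * s * eps + nu^2 * uxx - eps * u + C) * (-ux)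
         - (2/3 * (1 - P) * uxx + eps/3 * (zeta + s) * u + eps * u^2
     - nu^2 * u * uxx - 2/9 * eps * (zeta^2 + 2 * s * zeta + nu)
     - K * (3/2 * u + zeta + s)) * 0"
  subgoal using E unfolding C by (simp add: field_simps)
  subgoal
  proof -
    have h: "(1/3 * eps * zeta + 1/3 * s * eps + nu^2 * uxx - eps * u) * (3/2 * u + zeta + s)
       + 3/2 * (2/3 * (1 - P) * uxx + eps/3 * (zeta + s) * u + eps * u^2
     - nu^2 * u * uxx - 2/9 * eps * (zeta^2 + 2 * s * zeta + nu)) = (1 + zeta * nu^2) * uxx"
      unfolding P s[symmetric] by (simp add: field_simps power2_eq_square)
    have "(1/3 * eps * zeta + 1/3 * s * eps + nu^2 * uxx - eps * u + C) *
        (- 2/3 * (1 - P) * uxx - eps/3 * (zeta + s) * u - eps * u^2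
     + nu^2 * u * uxx + 2/9 * eps * (zeta^2 + 2 * s * zeta + nu)
     - K * (3/2 * u + zeta + s))
      - (2/3 * (1 - P) * uxx + eps/3 * (zeta + s) * u + eps * u^2
     - nu^2 * u * uxx - 2/9 * eps * (zeta^2 + 2 * s * zeta + nu)
     - K * (3/2 * u + zeta + s)) * (- 1/3 * eps * zeta - 1/3 * s * eps - nu^2 * uxx + eps * u + C)
     = - 2 * K * ((1/3 * eps * zeta + 1/3 * s * eps + nu^2 * uxx - eps * u) * (3/2 * u + zeta + s)
       + 3/2 * (2/3 * (1 - P) * uxx + eps/3 * (zeta + s) * u + eps * u^2
     - nu^2 * u * uxx - 2/9 * eps * (zeta^2 + 2 * s * zeta + nu)))"
      unfolding C by (simp add: field_simps)
    also have "\<dots> = - (K * (2 * (1 + zeta * nu^2))) * uxx" unfolding h by simp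
    finally show ?thesis using K by simp
  qed
  subgoal using E unfolding C by (simp add: field_simps)
  done

lemma alg:
  fixes nu eps zeta u ux uxx uxxx ut uxxt :: real
  assumes nu: "nu \<ge> 0" and nz: "1 + zeta * nu^2 \<noteq> 0" and pw: "nu powr (5/2) = nu^2 * sqrt nu"
  and E: "- 2 * nu^2 * ux * uxx + 3 * eps * ux * u - nu^2 * uxxx * u + 2/3 * uxxx
      - 2/3 * nu powr (5/2) * uxxx + eps * ut - nu^2 * uxxt = 0"
  shows "(2/3 * (1 - nu powr (5/2)) * uxxx + eps/3 * (zeta + sqrt nu) * ux + eps * (2 * u * ux)
     - nu^2 * (ux * uxx + u * uxxx) - 1 / (2 * (1 + zeta * nu^2)) * (3/2 * ux)) - (nu^2*uxxt - eps*ut)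
       = f31 nu eps zeta u ux uxx * f22 nu eps zeta u ux uxx - f32 nu eps zeta u ux uxx * f21 nu eps zeta u ux uxx"
    and "- uxx - 0 = f11 nu eps zeta u ux uxx * f32 nu eps zeta u ux uxx - f12 nu eps zeta u ux uxx * f31 nu eps zeta u ux uxx"
    and "(- 2/3 * (1 - nu powr (5/2)) * uxxx - eps/3 * (zeta + sqrt nu) * ux - eps * (2 * u * ux)
     + nu^2 * (ux * uxx + u * uxxx) - 1 / (2 * (1 + zeta * nu^2)) * (3/2 * ux)) - (eps*ut - nu^2*uxxt)
       = f11 nu eps zeta u ux uxx * f22 nu eps zeta u ux uxx - f12 nu eps zeta u ux uxx * f21 nu eps zeta u ux uxx"
proof -
  define s where "s = sqrt nu"
  define P where "P = nu powr (5/2)"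
  define K where "K = 1 / (2 * (1 + zeta * nu^2))"
  define C where "C = 3 / (4 * (1 + zeta * nu^2))"
  have s: "s^2 = nu" using nu by (simp add: s_def)
  have P: "P = nu^2 * s" using pw by (simp add: s_def P_def)
  have K: "K * (2 * (1 + zeta * nu^2)) = 1" using nz by (simp add: K_def)
  have C: "C = 3/2*K" using nz by (simp add: K_def C_def field_simps)
  have E': "- 2 * nu^2 * ux * uxx + 3 * eps * ux * u - nu^2 * uxxx * u + 2/3 * uxxx
      - 2/3 * P * uxxx + eps * ut - nu^2 * uxxt = 0" using E by (simp add: P_def)
  show "(2/3 * (1 - nu powr (5/2)) * uxxx + eps/3 * (zeta + sqrt nu) * ux + eps * (2 * u * ux)
     - nu^2 * (ux * uxx + u * uxxx) - 1 / (2 * (1 + zeta * nu^2)) * (3/2 * ux)) - (nu^2*uxxt - eps*ut)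
       = f31 nu eps zeta u ux uxx * f22 nu eps zeta u ux uxx - f32 nu eps zeta u ux uxx * f21 nu eps zeta u ux uxx"
    using alg0(1)[OF s P K C E'] unfolding f11_def f12_def f21_def f22_def f31_def f32_def
      s_def[symmetric] P_def[symmetric] K_def[symmetric] C_def[symmetric] by simp
  show "- uxx - 0 = f11 nu eps zeta u ux uxx * f32 nu eps zeta u ux uxx - f12 nu eps zeta u ux uxx * f31 nu eps zeta u ux uxx"
    using alg0(2)[OF s P K C E'] unfolding f11_def f12_def f21_def f22_def f31_def f32_def
      s_def[symmetric] P_def[symmetric] K_def[symmetric] C_def[symmetric] by simp
  show "(- 2/3 * (1 - nu powr (5/2)) * uxxx - eps/3 * (zeta + sqrt nu) * ux - eps * (2 * u * ux)
     + nu^2 * (ux * uxx + u * uxxx) - 1 / (2 * (1 + zeta * nu^2)) * (3/2 * ux)) - (eps*ut - nu^2*uxxt)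
       = f11 nu eps zeta u ux uxx * f22 nu eps zeta u ux uxx - f12 nu eps zeta u ux uxx * f21 nu eps zeta u ux uxx"
    using alg0(3)[OF s P K C E'] unfolding f11_def f12_def f21_def f22_def f31_def f32_def
      s_def[symmetric] P_def[symmetric] K_def[symmetric] C_def[symmetric] by simp
qed

theorem corollary3:
  fixes nu eps zeta :: real
  assumes "nu \<ge> 0" and "eps \<in> {0, 1}" and "1 + zeta * nu^2 \<noteq> 0"
  shows "(\<forall>f\<in>{(f11, f12), (f21, f22), (f31, f32)}.
            \<exists>u ux uxx. (fst f) nu eps zeta u ux uxx \<noteq> 0 \<or> (snd f) nu eps zeta u ux uxx \<noteq> 0)
       \<and> (\<forall>(S :: (real \<times> real) set) U. open S \<longrightarrow> smooth_on2 S U \<longrightarrow>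
            (\<forall>(x,t)\<in>S. eqE nu eps U x t) \<longrightarrow>
            structure_eqs S
              (pull f11 nu eps zeta U) (pull f12 nu eps zeta U)
              (pull f21 nu eps zeta U) (pull f22 nu eps zeta U)
              (pull f31 nu eps zeta U) (pull f32 nu eps zeta U))"
proof
  have n11: "\<exists>u ux uxx. f11 nu eps zeta u ux uxx \<noteq> 0"
  proof (rule ccontr)
    assume "\<not> ?thesis"
    hence "f11 nu eps zeta 0 0 0 = 0" "f11 nu eps zeta 0 0 1 = 0" "f11 nu eps zeta 1 0 0 = 0" by auto
    hence "nu^2 = 0" "eps = 0" unfolding f11_def by (simp_all add: algebra_simps)
    with \<open>f11 nu eps zeta 0 0 0 = 0\<close> show False unfolding f11_def by simp
  qed
  have n31: "\<exists>u ux uxx. f31 nu eps zeta u ux uxx \<noteq> 0"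
  proof (rule ccontr)
    assume "\<not> ?thesis"
    hence "f31 nu eps zeta 0 0 0 = 0" "f31 nu eps zeta 0 0 1 = 0" "f31 nu eps zeta 1 0 0 = 0" by auto
    hence "nu^2 = 0" "eps = 0" unfolding f31_def by (simp_all add: algebra_simps)
    with \<open>f31 nu eps zeta 0 0 0 = 0\<close> show False unfolding f31_def by simp
  qed
  have n22: "f22 nu eps zeta 0 1 0 \<noteq> 0" unfolding f22_def by simp
  show "\<forall>f\<in>{(f11, f12), (f21, f22), (f31, f32)}.
            \<exists>u ux uxx. (fst f) nu eps zeta u ux uxx \<noteq> 0 \<or> (snd f) nu eps zeta u ux uxx \<noteq> 0"
    using n11 n31 n22 by auto
next
  show "\<forall>(S :: (real \<times> real) set) U. open S \<longrightarrow> smooth_on2 S U \<longrightarrow>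
            (\<forall>(x,t)\<in>S. eqE nu eps U x t) \<longrightarrow>
            structure_eqs S
              (pull f11 nu eps zeta U) (pull f12 nu eps zeta U)
              (pull f21 nu eps zeta U) (pull f22 nu eps zeta U)
              (pull f31 nu eps zeta U) (pull f32 nu eps zeta U)"
  proof (intro allI impI)
    fix S :: "(real \<times> real) set" and U
    assume sm: "smooth_on2 S U" and E: "\<forall>(x,t)\<in>S. eqE nu eps U x t"
    show "structure_eqs S
              (pull f11 nu eps zeta U) (pull f12 nu eps zeta U)
              (pull f21 nu eps zeta U) (pull f22 nu eps zeta U)
              (pull f31 nu eps zeta U) (pull f32 nu eps zeta U)"
      unfolding structure_eqs_def
    proof (clarify)
      fix x t assume xt: "(x, t) \<in> S"
      have dif: "\<And>ds. (\<lambda>y. pd ds U y t) differentiable (at x) \<and> (\<lambda>s. pd ds U x s) differentiable (at t)"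
      proof -
        fix ds
        have "\<forall>(x,t)\<in>S. (\<lambda>y. pd ds U y t) differentiable (at x) \<and> (\<lambda>s. pd ds U x s) differentiable (at t)"
          using sm unfolding smooth_on2_def by blast
        from bspec[OF this xt] show "(\<lambda>y. pd ds U y t) differentiable (at x) \<and> (\<lambda>s. pd ds U x s) differentiable (at t)"
          by simp
      qed
      have Dx: "\<And>ds. ((\<lambda>y. pd ds U y t) has_real_derivative px (pd ds U) x t) (at x)"
        using dif by (simp add: px_def DERIV_deriv_iff_real_differentiable)
      have Dt: "\<And>ds. ((\<lambda>s. pd ds U x s) has_real_derivative pt (pd ds U) x t) (at t)"
        using dif by (simp add: pt_def DERIV_deriv_iff_real_differentiable)
      have x0: "((\<lambda>y. U y t) has_real_derivative px U x t) (at x)" using Dx[of "[]"] by simp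
      have x1: "((\<lambda>y. px U y t) has_real_derivative px (px U) x t) (at x)" using Dx[of "[True]"] by simp
      have x2: "((\<lambda>y. px (px U) y t) has_real_derivative px (px (px U)) x t) (at x)" using Dx[of "[True,True]"] by simp
      have t0: "((\<lambda>s. U x s) has_real_derivative pt U x t) (at t)" using Dt[of "[]"] by simp
      have t2: "((\<lambda>s. px (px U) x s) has_real_derivative pt (px (px U)) x t) (at t)" using Dt[of "[True,True]"] by simp
      have e: "eqE nu eps U x t" using E xt by auto
      have sq: "sqrt nu ^ 2 = nu" using assms(1) by simp
      have pw: "nu powr (5/2) = nu^2 * sqrt nu"
      proof (cases "nu = 0")
        case False
        hence p: "0 < nu" using assms(1) by simp
        have "nu powr (5/2) = nu powr (2 + 1/2)" by simp
        also have "\<dots> = nu powr 2 * nu powr (1/2)" by (rule powr_add)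
        also have "nu powr 2 = nu^2" using p by simp
        also have "nu powr (1/2) = sqrt nu" using p by (simp add: powr_half_sqrt)
        finally show ?thesis .
      qed simp
      have nz: "1 + zeta * nu^2 \<noteq> 0" by fact
      note ds = pxp ptp d11[OF x0 x2] d12[OF nz x0 x2] d21 d22[OF x1] d31[OF x0 x2] d32[OF nz x0 x2]
           d11[OF t0 t2] d12[OF nz t0 t2] d31[OF t0 t2] d32[OF nz t0 t2]
      show "px (pull f12 nu eps zeta U) x t - pt (pull f11 nu eps zeta U) x t =
       pull f31 nu eps zeta U x t * pull f22 nu eps zeta U x t - pull f32 nu eps zeta U x t * pull f21 nu eps zeta U x t \<and>
       px (pull f22 nu eps zeta U) x t - pt (pull f21 nu eps zeta U) x t =
       pull f11 nu eps zeta U x t * pull f32 nu eps zeta U x t - pull f12 nu eps zeta U x t * pull f31 nu eps zeta U x t \<and>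
       px (pull f32 nu eps zeta U) x t - pt (pull f31 nu eps zeta U) x t =
       pull f11 nu eps zeta U x t * pull f22 nu eps zeta U x t - pull f12 nu eps zeta U x t * pull f21 nu eps zeta U x t"
        unfolding ds pull_def using alg[OF assms(1) nz pw e[unfolded eqE_def Let_def]] by simp
    qed
  qed
qed

end
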